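(* Let $F$ be the class of functions computed by scalar-output $\ell_\infty$-dist nets with input dimension $d$, width $w\ge d$ and depth (number of hidden layers) $L$, with all parameters ranging over the reals. Then the VC dimension of $F$ satisfies $\mathrm{VCdim}(F)=\tilde O(L^2w^4)$.
   Context: An $\ell_\infty$-dist net takes $\mathbf x^{(0)}=\mathbf x\in\mathbb{R}^d$ and computes, for each layer $l$ and unit $k$, $x^{(l)}_k=\|\mathbf x^{(l-1)}-\mathbf w^{(l,k)}\|_\infty+b^{(l,k)}$ with real parameters $\mathbf w^{(l,k)}$, $b^{(l,k)}$; the width is the maximum number of units per layer. The VC dimension of a real-valued class is that of the associated sign classifiers $\mathbf x\mapsto\mathrm{sign}(g(\mathbf x))$. $\tilde O(\cdot)$ hides absolute constants and polylogarithmic factors. *)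

theory Defs
  imports Complex_Main "HOL-Library.Extended_Real"
begin

text \<open>Vectors in R^n are represented as real lists of length n.\<close>

definition linf_dist :: "real list \<Rightarrow> real list \<Rightarrow> real" where
  "linf_dist x v = foldr max (map (\<lambda>(a, c). \<bar>a - c\<bar>) (zip x v)) 0"

text \<open>A unit is a pair (weight vector, bias); a layer is a list of units.\<close>
type_synonym unit_param = "real list \<times> real"
type_synonym layer_param = "unit_param list"

definition unit_eval :: "real list \<Rightarrow> unit_param \<Rightarrow> real" where
  "unit_eval x u = linf_dist x (fst u) + snd u"

definition layer_eval :: "layer_param \<Rightarrow> real list \<Rightarrow> real list" where
  "layer_eval ly x = map (unit_eval x) ly"

definition net_eval :: "layer_param list \<Rightarrow> real list \<Rightarrow> real list" where
  "net_eval net x = foldl (\<lambda>y ly. layer_eval ly y) x net"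

text \<open>Well-formed net with layer sizes ns = [n_0, n_1, ..., n_K]: layer l has n_l units,
  each with a weight vector of length n_(l-1).\<close>
definition net_shape :: "nat list \<Rightarrow> layer_param list \<Rightarrow> bool" where
  "net_shape ns net \<longleftrightarrow> length ns = length net + 1 \<and>
     (\<forall>l < length net. length (net ! l) = ns ! (Suc l) \<and>
        (\<forall>u \<in> set (net ! l). length (fst u) = ns ! l))"

text \<open>Class of scalar-output l_inf-dist nets: input dimension d, L hidden layers
  each with between 1 and w units (so width at most w), followed by one output unit.\<close>
definition linf_net_class :: "nat \<Rightarrow> nat \<Rightarrow> nat \<Rightarrow> (real list \<Rightarrow> real) set" where
  "linf_net_class d w L =
     {(\<lambda>x. hd (net_eval net x)) | net hs.
        length hs = L \<and> (\<forall>h \<in> set hs. 1 \<le> h \<and> h \<le> w) \<and>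
        net_shape ([d] @ hs @ [1]) net}"

text \<open>Shattering by the sign classifiers x \<mapsto> sign(g x) (with sign 0 = +1),
  points taken in R^d.\<close>
definition shatters :: "nat \<Rightarrow> (real list \<Rightarrow> real) set \<Rightarrow> real list set \<Rightarrow> bool" where
  "shatters d F S \<longleftrightarrow> (\<forall>x \<in> S. length x = d) \<and>
     (\<forall>T \<subseteq> S. \<exists>g \<in> F. \<forall>x \<in> S. (g x \<ge> 0 \<longleftrightarrow> x \<in> T))"

definition VCdim :: "nat \<Rightarrow> (real list \<Rightarrow> real) set \<Rightarrow> ereal" where
  "VCdim d F = Sup {ereal (real (card S)) | S. finite S \<and> shatters d F S}"

end

theory Submission
  imports Defs
begin

definition aff :: "nat set \<Rightarrow> ((nat \<Rightarrow> real) \<Rightarrow> real) \<Rightarrow> bool" where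
 "aff V f \<longleftrightarrow> (\<exists>a b. \<forall>\<theta>. f \<theta> = b + (\<Sum>i\<in>V. a i * \<theta> i))"

definition pat :: "((nat\<Rightarrow>real)\<Rightarrow>real) list \<Rightarrow> (nat\<Rightarrow>real) \<Rightarrow> bool list" where
 "pat G \<theta> = map (\<lambda>f. 0 \<le> f \<theta>) G"

lemma aff_comb:
  assumes "aff V g" shows "g (\<lambda>i. t * x i + (1-t) * y i) = t * g x + (1-t) * g y"
proof -
  from assms obtain a b where g: "\<forall>\<theta>. g \<theta> = b + (\<Sum>i\<in>V. a i * \<theta> i)" unfolding aff_def by blast
  have "(\<Sum>i\<in>V. a i * (t * x i + (1-t) * y i)) = (\<Sum>i\<in>V. t * (a i * x i) + (1-t) * (a i * y i))"
    by (rule sum.cong) (auto simp: algebra_simps)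
  also have "\<dots> = t * (\<Sum>i\<in>V. a i * x i) + (1-t) * (\<Sum>i\<in>V. a i * y i)"
    by (simp add: sum_distrib_left sum.distrib)
  finally have "(\<Sum>i\<in>V. a i * (t * x i + (1-t) * y i)) = t * (\<Sum>i\<in>V. a i * x i) + (1-t) * (\<Sum>i\<in>V. a i * y i)" .
  then show ?thesis unfolding g[rule_format] by (simp add: algebra_simps)
qed

lemma aff_subst:
  assumes "finite V" "j \<in> V" "aff V g" "a j \<noteq> 0"
  shows "aff (V - {j}) (\<lambda>\<theta>. g (\<theta>(j := - (b + (\<Sum>i\<in>V-{j}. a i * \<theta> i)) / a j)))"
proof -
  from assms(3) obtain c e where g: "\<forall>\<theta>. g \<theta> = e + (\<Sum>i\<in>V. c i * \<theta> i)" unfolding aff_def by blast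
  have "g (\<theta>(j := s)) = e + c j * s + (\<Sum>i\<in>V-{j}. c i * \<theta> i)" for \<theta> s
  proof -
    have "(\<Sum>i\<in>V. c i * (\<theta>(j := s)) i) = c j * s + (\<Sum>i\<in>V-{j}. c i * (\<theta>(j := s)) i)"
      using assms(1,2) by (simp add: sum.remove)
    also have "(\<Sum>i\<in>V-{j}. c i * (\<theta>(j := s)) i) = (\<Sum>i\<in>V-{j}. c i * \<theta> i)"
      by (rule sum.cong) auto
    finally show ?thesis using g by simp
  qed
  then have E: "g (\<theta>(j := - (b + (\<Sum>i\<in>V-{j}. a i * \<theta> i)) / a j)) =
     (e - c j * b / a j) + (\<Sum>i\<in>V-{j}. (c i - c j * a i / a j) * \<theta> i)" for \<theta>
    using assms(4)
    by (simp add: algebra_simps sum_subtractf sum_distrib_left sum_divide_distrib diff_divide_distrib add_divide_distrib)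
  show ?thesis unfolding aff_def
    by (intro exI[of _ "\<lambda>i. c i - c j * a i / a j"] exI[of _ "e - c j * b / a j"]) (use E in auto)
qed

lemma finite_range_pat: "finite (range (pat gs))"
proof -
  have "range (pat gs) \<subseteq> {xs. set xs \<subseteq> UNIV \<and> length xs = length gs}" by (auto simp: pat_def)
  then show ?thesis using finite_lists_length_eq[of "UNIV::bool set"] finite_subset by auto
qed

lemma pow_step: "(m+1::nat)^p + (m+1)^(p-1) \<le> (m+2)^p" if "p \<ge> 1"
proof -
  have "(m+1::nat)^p + (m+1)^(p-1) = (m+2) * (m+1)^(p-1)"
    using that by (cases p) auto
  also have "\<dots> \<le> (m+2) * (m+2)^(p-1)" by (intro mult_le_mono2 power_mono) auto
  also have "\<dots> = (m+2)^p" using that by (cases p) auto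
  finally show ?thesis .
qed

lemma crossing:
  assumes "\<forall>g\<in>set gs. aff V g" "aff V f" "0 \<le> f \<theta>1" "f \<theta>2 < 0" "pat gs \<theta>1 = pat gs \<theta>2"
  shows "\<exists>\<theta>0. f \<theta>0 = 0 \<and> pat gs \<theta>0 = pat gs \<theta>1"
proof -
  define t where "t = f \<theta>1 / (f \<theta>1 - f \<theta>2)"
  have t0: "0 \<le> t" and t1: "t < 1" using assms(3,4) by (auto simp: t_def field_simps)
  define \<theta>0 where "\<theta>0 = (\<lambda>i. t * \<theta>2 i + (1-t) * \<theta>1 i)"
  have "f \<theta>0 = t * f \<theta>2 + (1-t) * f \<theta>1" unfolding \<theta>0_def by (rule aff_comb[OF assms(2)])
  also have "\<dots> = 0" using assms(3,4) by (simp add: t_def field_simps)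
  finally have f0: "f \<theta>0 = 0" .
  have "(0 \<le> g \<theta>0) = (0 \<le> g \<theta>1)" if g: "g \<in> set gs" for g
  proof -
    have e: "g \<theta>0 = t * g \<theta>2 + (1-t) * g \<theta>1" unfolding \<theta>0_def by (rule aff_comb) (use assms(1) g in auto)
    have "(0 \<le> g \<theta>1) = (0 \<le> g \<theta>2)" using assms(5) g by (auto simp: pat_def)
    then show ?thesis unfolding e using t0 t1
      by (smt (verit, best) mult_nonneg_nonneg mult_pos_neg mult_nonneg_nonpos)
  qed
  then have "pat gs \<theta>0 = pat gs \<theta>1" by (auto simp: pat_def)
  with f0 show ?thesis by blast
qed

lemma count_pats_aux:
  assumes "length fs = n" "finite V" "\<forall>f\<in>set fs. aff V f"
  shows "card (range (pat fs)) \<le> (length fs + 1) ^ card V"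
  using assms
proof (induction n arbitrary: fs V)
  case 0
  then have "range (pat fs) = {[]}" by (auto simp: pat_def)
  then show ?case by simp
next
  case (Suc n)
  then obtain f gs where fs: "fs = f # gs" and lg: "length gs = n" by (cases fs) auto
  have IH: "card (range (pat hs)) \<le> (length gs + 1) ^ card W"
    if "finite W" "\<forall>f\<in>set hs. aff W f" "length hs = n" for hs W
    using Suc.IH[OF that(3) that(1,2)] lg that(3) by simp
  have prems: "finite V" "\<forall>f\<in>set (f#gs). aff V f" using Suc.prems fs by auto
  define R where "R = range (pat (f#gs))"
  define A where "A = {p. True # p \<in> R}"
  define B where "B = {p. False # p \<in> R}"
  have AB: "A \<union> B \<subseteq> range (pat gs)" by (auto simp: A_def B_def R_def pat_def)
  have finA: "finite A" and finB: "finite B" using AB finite_range_pat finite_subset by blast+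
  have "R \<subseteq> Cons True ` A \<union> Cons False ` B"
  proof
    fix r assume "r \<in> R"
    then obtain \<theta> where r: "r = pat (f#gs) \<theta>" by (auto simp: R_def)
    show "r \<in> Cons True ` A \<union> Cons False ` B"
    proof (cases "0 \<le> f \<theta>")
      case True
      then have "True # pat gs \<theta> \<in> R" by (auto simp: R_def pat_def intro!: image_eqI[of _ _ \<theta>])
      then show ?thesis using True r by (auto simp: A_def pat_def)
    next
      case False
      then have "False # pat gs \<theta> \<in> R" by (auto simp: R_def pat_def intro!: image_eqI[of _ _ \<theta>])
      then show ?thesis using False r by (auto simp: B_def pat_def)
    qed
  qed
  then have "card R \<le> card (Cons True ` A \<union> Cons False ` B)"
    using finA finB by (intro card_mono) auto
  also have "\<dots> \<le> card A + card B"
    by (meson add_mono card_Un_le card_image_le finA finB order_trans)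
  also have "\<dots> = card (A \<union> B) + card (A \<inter> B)" using card_Un_Int[OF finA finB] .
  finally have R1: "card R \<le> card (A \<union> B) + card (A \<inter> B)" .
  have IH1: "card (A \<union> B) \<le> (length gs + 1) ^ card V"
    using IH[of V gs] prems lg card_mono[OF finite_range_pat AB] by simp
  from prems have "aff V f" by auto
  then obtain a b where fab: "\<forall>\<theta>. f \<theta> = b + (\<Sum>i\<in>V. a i * \<theta> i)" unfolding aff_def by blast
  have both: "\<exists>\<theta>1 \<theta>2. 0 \<le> f \<theta>1 \<and> pat gs \<theta>1 = p \<and> f \<theta>2 < 0 \<and> pat gs \<theta>2 = p" if "p \<in> A \<inter> B" for p
  proof -
    from that have "True # p \<in> R" "False # p \<in> R" by (auto simp: A_def B_def)
    then obtain \<theta>1 \<theta>2 where "True # p = pat (f#gs) \<theta>1" "False # p = pat (f#gs) \<theta>2"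
      unfolding R_def by blast
    then have "0 \<le> f \<theta>1 \<and> pat gs \<theta>1 = p \<and> f \<theta>2 < 0 \<and> pat gs \<theta>2 = p"
      by (auto simp: pat_def)
    then show ?thesis by blast
  qed
  have cross: "\<exists>\<theta>0. f \<theta>0 = 0 \<and> pat gs \<theta>0 = p" if "p \<in> A \<inter> B" for p
  proof -
    from both[OF that] obtain \<theta>1 \<theta>2 where 1: "0 \<le> f \<theta>1" "pat gs \<theta>1 = p" and 2: "f \<theta>2 < 0" "pat gs \<theta>2 = p"
      by blast
    show ?thesis using crossing[of gs V f \<theta>1 \<theta>2] 1 2 prems by auto
  qed
  show ?case
  proof (cases "\<forall>i\<in>V. a i = 0")
    case True
    then have "f \<theta> = b" for \<theta> using fab by simp
    then have "A \<inter> B = {}" using both by force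
    then have "card R \<le> (length gs + 1) ^ card V" using R1 IH1 by simp
    also have "\<dots> \<le> (length (f#gs) + 1) ^ card V" by (simp add: power_mono)
    finally show ?thesis by (simp add: R_def fs)
  next
    case False
    then obtain j where j: "j \<in> V" "a j \<noteq> 0" by auto
    define \<sigma> where "\<sigma> = (\<lambda>\<theta>::nat\<Rightarrow>real. \<theta>(j := - (b + (\<Sum>i\<in>V-{j}. a i * \<theta> i)) / a j))"
    have affs: "\<forall>g\<in>set (map (\<lambda>g \<theta>. g (\<sigma> \<theta>)) gs). aff (V - {j}) g"
      using aff_subst[where a=a and b=b and j=j, OF prems(1) j(1) _ j(2)] prems(2) by (auto simp: \<sigma>_def)
    have "A \<inter> B \<subseteq> range (pat (map (\<lambda>g \<theta>. g (\<sigma> \<theta>)) gs))"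
    proof
      fix p assume "p \<in> A \<inter> B"
      then obtain \<theta>0 where t: "f \<theta>0 = 0" "pat gs \<theta>0 = p" using cross by blast
      have "f \<theta>0 = b + a j * \<theta>0 j + (\<Sum>i\<in>V-{j}. a i * \<theta>0 i)"
        using fab prems(1) j(1) by (simp add: sum.remove)
      then have "\<theta>0 j = - (b + (\<Sum>i\<in>V-{j}. a i * \<theta>0 i)) / a j" using t(1) j(2)
        by (simp add: field_simps)
      then have "\<sigma> \<theta>0 = \<theta>0" by (auto simp: \<sigma>_def)
      then have "pat (map (\<lambda>g \<theta>. g (\<sigma> \<theta>)) gs) \<theta>0 = p" using t(2) by (simp add: pat_def o_def)
      then show "p \<in> range (pat (map (\<lambda>g \<theta>. g (\<sigma> \<theta>)) gs))" by blast
    qed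
    then have "card (A \<inter> B) \<le> card (range (pat (map (\<lambda>g \<theta>. g (\<sigma> \<theta>)) gs)))"
      by (rule card_mono[OF finite_range_pat])
    also have "\<dots> \<le> (length gs + 1) ^ card (V - {j})"
      using IH[of "V - {j}" "map (\<lambda>g \<theta>. g (\<sigma> \<theta>)) gs"] prems(1) affs lg by simp
    finally have "card (A \<inter> B) \<le> (length gs + 1) ^ (card V - 1)"
      using prems(1) j(1) by simp
    moreover have "card V \<ge> 1" using prems(1) j(1) card_gt_0_iff
      by (metis One_nat_def Suc_leI empty_iff)
    ultimately have "card R \<le> (length gs + 2) ^ card V"
      using R1 IH1 pow_step[of "card V" "length gs"] by linarith
    then show ?thesis by (simp add: R_def fs)
  qed
qed

lemma count_pats:
  assumes "finite V" "\<forall>f\<in>set fs. aff V f"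
  shows "card (range (pat fs)) \<le> (length fs + 1) ^ card V"
  using count_pats_aux[OF refl assms] .

definition same :: "((nat\<Rightarrow>real)\<Rightarrow>real) list \<Rightarrow> (nat\<Rightarrow>real) \<Rightarrow> (nat\<Rightarrow>real) \<Rightarrow> bool" where
  "same G \<theta> \<theta>' \<longleftrightarrow> (\<forall>g\<in>set G. (0 \<le> g \<theta>) = (0 \<le> g \<theta>'))"

definition pw where
  "pw V G As v \<longleftrightarrow> (\<forall>a\<in>set As. aff V a) \<and> (\<forall>g\<in>set G. aff V g) \<and>
     (\<forall>\<theta> \<theta>'. same G \<theta> \<theta>' \<longrightarrow> (\<exists>a\<in>set As. v \<theta> = a \<theta> \<and> v \<theta>' = a \<theta>'))"

definition pwb :: "nat set \<Rightarrow> nat \<Rightarrow> ((nat\<Rightarrow>real)\<Rightarrow>real) \<Rightarrow> bool" where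
  "pwb V M v \<longleftrightarrow> (\<exists>G As. length G \<le> M^2 \<and> length As \<le> M \<and> pw V G As v)"

lemma aff_const: "aff V (\<lambda>_. c)"
  unfolding aff_def by (intro exI[of _ "\<lambda>_. 0"] exI[of _ c]) simp

lemma aff_var: assumes "finite V" "j \<in> V" shows "aff V (\<lambda>\<theta>. \<theta> j)"
proof -
  have "(\<Sum>i\<in>V. (if i = j then 1 else 0) * \<theta> i) = (\<Sum>i\<in>V. if i = j then \<theta> j else 0)" for \<theta> :: "nat \<Rightarrow> real"
    by (rule sum.cong) auto
  then have "\<theta> j = 0 + (\<Sum>i\<in>V. (if i = j then 1 else 0) * \<theta> i)" for \<theta> :: "nat \<Rightarrow> real"
    using assms by simp
  then show ?thesis unfolding aff_def by (intro exI[of _ "\<lambda>i. if i = j then 1 else 0"] exI[of _ 0]) blast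
qed

lemma aff_add: "aff V f \<Longrightarrow> aff V g \<Longrightarrow> aff V (\<lambda>\<theta>. f \<theta> + g \<theta>)"
proof -
  assume "aff V f" "aff V g"
  then obtain a b c e where f: "\<forall>\<theta>. f \<theta> = b + (\<Sum>i\<in>V. a i * \<theta> i)" and g: "\<forall>\<theta>. g \<theta> = e + (\<Sum>i\<in>V. c i * \<theta> i)"
    unfolding aff_def by blast
  show ?thesis unfolding aff_def
    by (intro exI[of _ "\<lambda>i. a i + c i"] exI[of _ "b + e"]) (simp add: f g sum.distrib algebra_simps)
qed

lemma aff_neg: "aff V f \<Longrightarrow> aff V (\<lambda>\<theta>. - f \<theta>)"
proof -
  assume "aff V f"
  then obtain a b where f: "\<forall>\<theta>. f \<theta> = b + (\<Sum>i\<in>V. a i * \<theta> i)"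
    unfolding aff_def by blast
  show ?thesis unfolding aff_def
    by (intro exI[of _ "\<lambda>i. - a i"] exI[of _ "- b"]) (simp add: f sum_negf)
qed

lemma aff_diff: "aff V f \<Longrightarrow> aff V g \<Longrightarrow> aff V (\<lambda>\<theta>. f \<theta> - g \<theta>)"
  using aff_add[of V f "\<lambda>\<theta>. - g \<theta>"] aff_neg[of V g] by simp

lemma pwb_mono: "pwb V M v \<Longrightarrow> M \<le> M' \<Longrightarrow> pwb V M' v"
  unfolding pwb_def by (meson order_trans power_mono zero_le)

lemma pwb_const: "pwb V 1 (\<lambda>_. c)"
  unfolding pwb_def pw_def
  by (intro exI[of _ "[]"] exI[of _ "[\<lambda>_. c]"]) (simp add: aff_const)

lemma pwb_add_aff: assumes "pwb V M u" "aff V h" shows "pwb V M (\<lambda>\<theta>. u \<theta> + h \<theta>)"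
proof -
  from assms obtain G As where G: "length G \<le> M^2" "length As \<le> M" "pw V G As u" unfolding pwb_def by blast
  have "pw V G (map (\<lambda>a \<theta>. a \<theta> + h \<theta>) As) (\<lambda>\<theta>. u \<theta> + h \<theta>)"
    using G(3) assms(2) unfolding pw_def by (fastforce intro: aff_add)
  then show ?thesis unfolding pwb_def using G(1,2) by (metis length_map)
qed

lemma pwb_diff_aff: assumes "pwb V M u" "aff V h" shows "pwb V M (\<lambda>\<theta>. u \<theta> - h \<theta>)"
  using pwb_add_aff[OF assms(1) aff_neg[OF assms(2)]] by simp

lemma pwb_abs: assumes "pwb V M u" shows "pwb V (2*M) (\<lambda>\<theta>. \<bar>u \<theta>\<bar>)"
proof -
  from assms obtain G As where G: "length G \<le> M^2" "length As \<le> M" "pw V G As u" unfolding pwb_def by blast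
  have a1: "length G \<le> M*M" using G(1) by (simp add: power2_eq_square)
  have a2: "M \<le> M*M" by (rule le_square)
  have "length (G @ As) = length G + length As" by simp
  then have "length (G @ As) \<le> 4*(M*M)" using a1 a2 G(2) by linarith
  then have L1: "length (G @ As) \<le> (2*M)^2" by (simp add: power2_eq_square)
  have L2: "length (As @ map (\<lambda>a \<theta>. - a \<theta>) As) \<le> 2*M" using G(2) by simp
  have A1: "\<forall>a\<in>set (As @ map (\<lambda>a \<theta>. - a \<theta>) As). aff V a" using G(3) by (auto simp: pw_def intro: aff_neg)
  have A2: "\<forall>g\<in>set (G @ As). aff V g" using G(3) by (auto simp: pw_def)
  have A3: "\<exists>b\<in>set (As @ map (\<lambda>a \<theta>. - a \<theta>) As). \<bar>u \<theta>\<bar> = b \<theta> \<and> \<bar>u \<theta>'\<bar> = b \<theta>'"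
    if s: "same (G @ As) \<theta> \<theta>'" for \<theta> \<theta>'
  proof -
    from s have "same G \<theta> \<theta>'" by (simp add: same_def)
    then obtain a where a: "a \<in> set As" "u \<theta> = a \<theta>" "u \<theta>' = a \<theta>'" using G(3) unfolding pw_def by blast
    have sa: "(0 \<le> a \<theta>) = (0 \<le> a \<theta>')" using s a(1) by (simp add: same_def)
    show ?thesis
    proof (cases "0 \<le> a \<theta>")
      case True
      then show ?thesis using a sa by (intro bexI[of _ a]) auto
    next
      case False
      then show ?thesis using a sa by (intro bexI[of _ "\<lambda>\<theta>. - a \<theta>"]) auto
    qed
  qed
  have "pw V (G @ As) (As @ map (\<lambda>a \<theta>. - a \<theta>) As) (\<lambda>\<theta>. \<bar>u \<theta>\<bar>)"
    unfolding pw_def using A1 A2 A3 by blast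
  then show ?thesis unfolding pwb_def using L1 L2 by blast
qed

lemma pwb_max: assumes "pwb V M1 u" "pwb V M2 v" shows "pwb V (M1 + M2) (\<lambda>\<theta>. max (u \<theta>) (v \<theta>))"
proof -
  from assms obtain G1 As1 G2 As2 where G1: "length G1 \<le> M1^2" "length As1 \<le> M1" "pw V G1 As1 u"
    and G2: "length G2 \<le> M2^2" "length As2 \<le> M2" "pw V G2 As2 v" unfolding pwb_def by blast
  define D where "D = concat (map (\<lambda>a. map (\<lambda>b \<theta>. a \<theta> - b \<theta>) As2) As1)"
  have lD: "length D = length As1 * length As2"
    unfolding D_def by (induction As1) auto
  have setD: "set D = {(\<lambda>\<theta>. a \<theta> - b \<theta>) | a b. a \<in> set As1 \<and> b \<in> set As2}"
    unfolding D_def by auto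
  have "length As1 * length As2 \<le> M1 * M2" by (rule mult_le_mono) (use G1 G2 in auto)
  then have "length (G1 @ G2 @ D) \<le> M1^2 + M2^2 + M1 * M2"
    using G1(1) G2(1) lD by simp
  also have "\<dots> \<le> (M1 + M2)^2" by (simp add: power2_eq_square algebra_simps)
  finally have L1: "length (G1 @ G2 @ D) \<le> (M1 + M2)^2" .
  have L2: "length (As1 @ As2) \<le> M1 + M2" using G1(2) G2(2) by simp
  have A1: "\<forall>a\<in>set (As1 @ As2). aff V a" using G1(3) G2(3) by (auto simp: pw_def)
  have "\<forall>g\<in>set D. aff V g" unfolding setD using G1(3) G2(3) unfolding pw_def
    by (blast intro: aff_diff)
  then have A2: "\<forall>g\<in>set (G1 @ G2 @ D). aff V g" using G1(3) G2(3) by (auto simp: pw_def)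
  have A3: "\<exists>c\<in>set (As1 @ As2). max (u \<theta>) (v \<theta>) = c \<theta> \<and> max (u \<theta>') (v \<theta>') = c \<theta>'"
    if s: "same (G1 @ G2 @ D) \<theta> \<theta>'" for \<theta> \<theta>'
  proof -
    from s have "same G1 \<theta> \<theta>'" "same G2 \<theta> \<theta>'" by (auto simp: same_def)
    then obtain a b where a: "a \<in> set As1" "u \<theta> = a \<theta>" "u \<theta>' = a \<theta>'"
      and b: "b \<in> set As2" "v \<theta> = b \<theta>" "v \<theta>' = b \<theta>'" using G1(3) G2(3) unfolding pw_def by meson
    have "(\<lambda>\<theta>. a \<theta> - b \<theta>) \<in> set D" using a(1) b(1) setD by blast
    then have sab: "(0 \<le> a \<theta> - b \<theta>) = (0 \<le> a \<theta>' - b \<theta>')" using s unfolding same_def by (metis UnCI set_append)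
    show ?thesis
    proof (cases "b \<theta> \<le> a \<theta>")
      case True
      then show ?thesis using a b sab by (intro bexI[of _ a]) auto
    next
      case False
      then show ?thesis using a b sab by (intro bexI[of _ b]) auto
    qed
  qed
  have "pw V (G1 @ G2 @ D) (As1 @ As2) (\<lambda>\<theta>. max (u \<theta>) (v \<theta>))"
    unfolding pw_def using A1 A2 A3 by blast
  then show ?thesis unfolding pwb_def using L1 L2 by blast
qed

lemma pwb_sign:
  assumes "pwb V M v"
  shows "\<exists>G. length G \<le> M^2 + M \<and> (\<forall>g\<in>set G. aff V g) \<and> (\<forall>\<theta> \<theta>'. same G \<theta> \<theta>' \<longrightarrow> (0 \<le> v \<theta>) = (0 \<le> v \<theta>'))"
proof -
  from assms obtain G As where G: "length G \<le> M^2" "length As \<le> M" "pw V G As v" unfolding pwb_def by blast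
  show ?thesis
  proof (intro exI[of _ "G @ As"] conjI allI impI)
    show "length (G @ As) \<le> M^2 + M" using G by simp
    show "\<forall>g\<in>set (G @ As). aff V g" using G(3) by (auto simp: pw_def)
    fix \<theta> \<theta>' assume s: "same (G @ As) \<theta> \<theta>'"
    then have "same G \<theta> \<theta>'" by (simp add: same_def)
    then obtain a where a: "a \<in> set As" "v \<theta> = a \<theta>" "v \<theta>' = a \<theta>'" using G(3) unfolding pw_def by blast
    then show "(0 \<le> v \<theta>) = (0 \<le> v \<theta>')" using s by (auto simp: same_def)
  qed
qed

lemma pwb_foldr_max:
  assumes "\<forall>h\<in>set hs. pwb V M h"
  shows "pwb V (1 + length hs * M) (\<lambda>\<theta>. foldr max (map (\<lambda>h. h \<theta>) hs) 0)"
  using assms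
proof (induction hs)
  case Nil
  then show ?case using pwb_const[of V 0] by simp
next
  case (Cons h hs)
  have "pwb V (M + (1 + length hs * M)) (\<lambda>\<theta>. max (h \<theta>) (foldr max (map (\<lambda>h. h \<theta>) hs) 0))"
    using Cons by (intro pwb_max) auto
  then show ?case by (simp add: algebra_simps)
qed

definition idx :: "nat \<Rightarrow> nat \<Rightarrow> nat \<Rightarrow> nat" where
  "idx l k i = prod_encode (l, prod_encode (k, i))"

definition dec :: "nat list \<Rightarrow> (nat \<Rightarrow> real) \<Rightarrow> layer_param list" where
  "dec ns \<theta> = map (\<lambda>l. map (\<lambda>k. (map (\<lambda>i. \<theta> (idx l k i)) [0..<ns!l], \<theta> (idx l k (ns!l))))
      [0..<ns!Suc l]) [0..<length ns - 1]"

lemma dec_surj: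
  assumes "net_shape ns net" shows "\<exists>\<theta>. dec ns \<theta> = net"
proof -
  define \<theta> where "\<theta> j = (case prod_decode j of (l, r) \<Rightarrow> (case prod_decode r of (k, i) \<Rightarrow>
      if i < length (fst (net!l!k)) then fst (net!l!k) ! i else snd (net!l!k)))" for j
  have t: "\<theta> (idx l k i) = (if i < length (fst (net!l!k)) then fst (net!l!k) ! i else snd (net!l!k))" for l k i
    by (simp add: \<theta>_def idx_def)
  have ln: "length ns - 1 = length net" using assms by (simp add: net_shape_def)
  have "dec ns \<theta> = net"
  proof (rule nth_equalityI)
    show "length (dec ns \<theta>) = length net" using ln by (simp add: dec_def)
    fix l assume "l < length (dec ns \<theta>)"
    then have l: "l < length net" using ln by (simp add: dec_def)
    have ll: "length (net ! l) = ns ! Suc l" using assms l by (simp add: net_shape_def)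
    show "dec ns \<theta> ! l = net ! l"
    proof (rule nth_equalityI)
      show "length (dec ns \<theta> ! l) = length (net ! l)" using l ln ll by (simp add: dec_def)
      fix k assume "k < length (dec ns \<theta> ! l)"
      then have k: "k < length (net!l)" using l ln ll by (simp add: dec_def)
      have u: "length (fst (net!l!k)) = ns!l" using assms l k nth_mem unfolding net_shape_def by blast
      have e: "dec ns \<theta> ! l ! k = (map (\<lambda>i. \<theta> (idx l k i)) [0..<ns!l], \<theta> (idx l k (ns!l)))"
        using l ln ll k by (simp add: dec_def)
      show "dec ns \<theta> ! l ! k = net ! l ! k"
        unfolding e
      proof (rule prod_eqI)
        show "fst (map (\<lambda>i. \<theta> (idx l k i)) [0..<ns ! l], \<theta> (idx l k (ns ! l))) = fst (net ! l ! k)"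
          using u by (auto simp: t intro: nth_equalityI)
        show "snd (map (\<lambda>i. \<theta> (idx l k i)) [0..<ns ! l], \<theta> (idx l k (ns ! l))) = snd (net ! l ! k)"
          using u by (simp add: t)
      qed
    qed
  qed
  then show ?thesis by blast
qed

lemma zip_lemma:
  assumes "length Fs = n"
  shows "map (\<lambda>(a, c). \<bar>a - c\<bar>) (zip (map (\<lambda>f. f \<theta>) Fs) (map (\<lambda>i. \<theta> (g i)) [0..<n]))
       = map (\<lambda>h. h \<theta>) (map (\<lambda>i \<theta>. \<bar>(Fs!i) \<theta> - \<theta> (g i)\<bar>) [0..<n])"
  using assms by (intro nth_equalityI) auto

lemma layers:
  assumes V: "finite V" and nsw: "\<forall>j<length ns. ns!j \<le> w" and w: "1 \<le> w" and lenx: "length x = ns!0"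
   and inV: "\<forall>l k i. l < length ns - 1 \<longrightarrow> k < ns!Suc l \<longrightarrow> i \<le> ns!l \<longrightarrow> idx l k i \<in> V"
  shows "l \<le> length ns - 1 \<Longrightarrow> \<exists>Fs. length Fs = ns!l \<and> (\<forall>f\<in>set Fs. pwb V ((2*w+1)^l) f) \<and>
     (\<forall>\<theta>. net_eval (take l (dec ns \<theta>)) x = map (\<lambda>f. f \<theta>) Fs)"
proof (induction l)
  case 0
  show ?case
  proof (intro exI[of _ "map (\<lambda>i \<theta>. x!i) [0..<ns!0]"] conjI allI)
    show "length (map (\<lambda>i \<theta>. x!i) [0..<ns!0]) = ns!0" by simp
    show "\<forall>f\<in>set (map (\<lambda>i \<theta>. x!i) [0..<ns!0]). pwb V ((2*w+1)^0) f" using pwb_const by auto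
    fix \<theta> :: "nat \<Rightarrow> real"
    show "net_eval (take 0 (dec ns \<theta>)) x = map (\<lambda>f. f \<theta>) (map (\<lambda>i \<theta>. x!i) [0..<ns!0])"
      using lenx by (auto simp: net_eval_def intro: nth_equalityI)
  qed
next
  case (Suc l)
  then have l: "l < length ns - 1" by simp
  from Suc obtain Fs where Fs: "length Fs = ns!l" "\<forall>f\<in>set Fs. pwb V ((2*w+1)^l) f"
     "\<forall>\<theta>. net_eval (take l (dec ns \<theta>)) x = map (\<lambda>f. f \<theta>) Fs" by auto
  define n where "n = ns!l"
  define M where "M = (2*w+1)^l"
  have M1: "1 \<le> M" by (simp add: M_def)
  have nw: "n \<le> w" using nsw l by (simp add: n_def)
  define U where "U = (\<lambda>k i \<theta>. \<bar>(Fs!i) \<theta> - \<theta> (idx l k i)\<bar>)"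
  define Fs' where "Fs' = map (\<lambda>k \<theta>. foldr max (map (\<lambda>h. h \<theta>) (map (U k) [0..<n])) 0 + \<theta> (idx l k n)) [0..<ns!Suc l]"
  show ?case
  proof (intro exI[of _ Fs'] conjI allI)
    show "length Fs' = ns ! Suc l" by (simp add: Fs'_def)
    show "\<forall>f\<in>set Fs'. pwb V ((2*w+1)^Suc l) f"
    proof
      fix f assume "f \<in> set Fs'"
      then obtain k where k: "k < ns!Suc l" and f: "f = (\<lambda>\<theta>. foldr max (map (\<lambda>h. h \<theta>) (map (U k) [0..<n])) 0 + \<theta> (idx l k n))"
        by (auto simp: Fs'_def)
      have "\<forall>h\<in>set (map (U k) [0..<n]). pwb V (2*M) h"
      proof
        fix h assume "h \<in> set (map (U k) [0..<n])"
        then obtain i where i: "i < n" "h = U k i" by auto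
        have "pwb V M (Fs!i)" using Fs(1,2) i(1) by (simp add: n_def M_def)
        moreover have "aff V (\<lambda>\<theta>. \<theta> (idx l k i))" using V inV l k i(1) by (intro aff_var) (auto simp: n_def)
        ultimately have "pwb V M (\<lambda>\<theta>. (Fs!i) \<theta> - \<theta> (idx l k i))" by (rule pwb_diff_aff)
        then show "pwb V (2*M) h" unfolding i(2) U_def by (rule pwb_abs)
      qed
      then have "pwb V (1 + n * (2*M)) (\<lambda>\<theta>. foldr max (map (\<lambda>h. h \<theta>) (map (U k) [0..<n])) 0)"
        using pwb_foldr_max by fastforce
      moreover have "aff V (\<lambda>\<theta>. \<theta> (idx l k n))" using V inV l k by (intro aff_var) (auto simp: n_def)
      ultimately have "pwb V (1 + n * (2*M)) f" unfolding f by (rule pwb_add_aff)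
      moreover have "1 + n * (2*M) \<le> (2*w+1)^Suc l"
      proof -
        have "n * (2*M) \<le> w * (2*M)" using nw by simp
        moreover have "(2*w+1)^Suc l = M + w * (2*M)" by (simp add: M_def algebra_simps)
        ultimately show ?thesis using M1 by linarith
      qed
      ultimately show "pwb V ((2*w+1)^Suc l) f" by (rule pwb_mono)
    qed
    fix \<theta> :: "nat \<Rightarrow> real"
    have ld: "l < length (dec ns \<theta>)" using l by (simp add: dec_def)
    have "net_eval (take (Suc l) (dec ns \<theta>)) x = layer_eval (dec ns \<theta> ! l) (net_eval (take l (dec ns \<theta>)) x)"
      using ld by (simp add: net_eval_def take_Suc_conv_app_nth)
    also have "\<dots> = layer_eval (dec ns \<theta> ! l) (map (\<lambda>f. f \<theta>) Fs)" using Fs(3) by simp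
    also have "\<dots> = map (\<lambda>f. f \<theta>) Fs'"
    proof -
      have dl: "dec ns \<theta> ! l = map (\<lambda>k. (map (\<lambda>i. \<theta> (idx l k i)) [0..<n], \<theta> (idx l k n))) [0..<ns!Suc l]"
        using l by (simp add: dec_def n_def)
      show ?thesis unfolding dl layer_eval_def Fs'_def
        by (simp add: unit_eval_def linf_dist_def zip_lemma[OF Fs(1)[folded n_def]] U_def)
    qed
    finally show "net_eval (take (Suc l) (dec ns \<theta>)) x = map (\<lambda>f. f \<theta>) Fs'" .
  qed
qed

lemma ln2_ge: "1/2 \<le> ln (2::real)"
proof -
  have "exp (1/2::real) * exp (1/2) = exp 1" by (simp add: exp_add[symmetric])
  also have "\<dots> \<le> 4" using exp_le by simp
  finally have a: "exp (1/2::real) * exp (1/2) \<le> 4" .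
  have "exp (1/2::real) \<le> 2"
  proof (rule ccontr)
    assume "\<not> exp (1/2::real) \<le> 2"
    then have "2 < exp (1/2::real)" by simp
    then have "2 * 2 < exp (1/2::real) * exp (1/2)" by (intro mult_strict_mono) auto
    with a show False by simp
  qed
  then show ?thesis by (metis exp_gt_zero ln_exp ln_le_cancel_iff zero_less_numeral)
qed

lemma arith_bound:
  fixes n L w M P :: nat
  assumes L: "1 \<le> L" and w: "1 \<le> w" and M: "M = (2*w+1)^(L+1)" and P: "P = (L+1)*w*(w+1)"
    and h: "2^n \<le> w^L * (n * (M^2+M) + 1)^P"
  shows "real n \<le> 256 * real L^2 * real w^4 * ln (real (L+w+2))"
proof (cases "n = 0")
  case True
  have "0 \<le> ln (real (L+w+2))" by simp
  then show ?thesis using True by simp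
next
  case False
  then have n1: "1 \<le> n" by simp
  have M1: "1 \<le> M" unfolding M by (rule one_le_power) simp
  have P1: "1 \<le> P" using P w by simp
  have "n * (M^2+M) + 1 \<le> 3 * n * M^2"
  proof -
    have "M \<le> M^2" by (simp add: power2_eq_square)
    then have a: "n * M \<le> n * M^2" by (rule mult_le_mono2)
    have b: "1 \<le> n * M^2" using n1 M1 by (simp add: power2_eq_square)
    have c: "n * (M^2+M) = n*M^2 + n*M" by (simp add: algebra_simps)
    show ?thesis using a b c by linarith
  qed
  then have "(n * (M^2+M) + 1)^P \<le> (3*n*M^2)^P" by (rule power_mono) simp
  then have "2^n \<le> w^L * (3*n*M^2)^P" using h by (meson le_trans mult_le_mono2)
  then have "real (2^n) \<le> real (w^L * (3*n*M^2)^P)" by (simp only: of_nat_le_iff)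
  then have h2: "(2::real)^n \<le> real w^L * (3 * real n * real M^2)^P" by simp
  define N where "N = real n"
  define l where "l = real L"
  define v where "v = real w"
  define Pr where "Pr = real P"
  define Q where "Q = real (L+w+2)"
  define q where "q = ln Q"
  have N1: "1 \<le> N" using n1 by (simp add: N_def)
  have l1: "1 \<le> l" using L by (simp add: l_def)
  have v1: "1 \<le> v" using w by (simp add: v_def)
  have Pr1: "1 \<le> Pr" using P1 by (simp add: Pr_def)
  have Prdef: "Pr = (l+1)*v*(v+1)" using P by (simp add: Pr_def l_def v_def algebra_simps)
  have Q4: "4 \<le> Q" using L w by (simp add: Q_def)
  have Qlv: "Q = l + v + 2" by (simp add: Q_def l_def v_def)
  have q0: "0 \<le> q" using Q4 by (simp add: q_def)
  have rM: "real M = (2*v+1)^(L+1)" by (simp only: M of_nat_power of_nat_add of_nat_mult of_nat_1 of_nat_numeral v_def)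
  have pos1: "0 < real M" using M1 by simp
  have "ln ((2::real)^n) \<le> ln (real w^L * (3 * real n * real M^2)^P)"
    using h2 n1 w pos1 by (subst ln_le_cancel_iff) auto
  also have "\<dots> = L * ln v + P * (ln (3*N) + 2 * (L+1) * ln (2*v+1))"
  proof -
    have lnM: "ln (real M) = (L+1) * ln (2*v+1)" unfolding rM using v1 ln_realpow[of "2*v+1" "L+1"] by (simp del: power_Suc)
    have "ln (3 * real n * real M^2) = ln (3*N) + 2 * ln (real M)"
      using n1 pos1 by (simp add: ln_mult ln_realpow N_def)
    then have "ln ((3 * real n * real M^2)^P) = P * (ln (3*N) + 2 * (L+1) * ln (2*v+1))"
      using n1 pos1 lnM by (simp add: ln_realpow)
    moreover have "ln (real w^L) = L * ln v" using w by (simp add: ln_realpow v_def)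
    moreover have "ln (real w^L * (3 * real n * real M^2)^P) = ln (real w^L) + ln ((3 * real n * real M^2)^P)"
      using n1 pos1 w by (intro ln_mult_pos) auto
    ultimately show ?thesis by simp
  qed
  finally have h3: "N * ln 2 \<le> l * ln v + Pr * (ln (3*N) + 2 * (l+1) * ln (2*v+1))"
    by (simp add: ln_realpow N_def l_def Pr_def algebra_simps)
  have h4: "ln (3*N) \<le> ln (12*Pr) + N / (4*Pr)"
  proof -
    have "ln (3*N) = ln (12*Pr) + ln (3*N / (12*Pr))" using N1 Pr1 ln_div[of "3*N" "12*Pr"] by simp
    also have "ln (3*N / (12*Pr)) \<le> 3*N / (12*Pr) - 1" using N1 Pr1 by (intro ln_le_minus_one) simp
    also have "\<dots> \<le> N / (4*Pr)" using Pr1 by (simp add: field_simps)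
    finally show ?thesis by simp
  qed
  have "Pr * ln (3*N) \<le> Pr * ln (12*Pr) + N / 4"
  proof -
    have "Pr * ln (3*N) \<le> Pr * (ln (12*Pr) + N / (4*Pr))" using h4 Pr1 by (intro mult_left_mono) auto
    also have "\<dots> = Pr * ln (12*Pr) + N / 4" using Pr1 by (simp add: field_simps)
    finally show ?thesis .
  qed
  with h3 have h5: "N * ln 2 \<le> (l * ln v + Pr * ln (12*Pr) + 2 * Pr * (l+1) * ln (2*v+1)) + N/4"
    by (simp add: algebra_simps)
  have "N / 2 \<le> N * ln 2" using ln2_ge N1 by (simp add: field_simps)
  moreover have gen: "\<And>X A. N/2 \<le> X \<Longrightarrow> X \<le> A + N/4 \<Longrightarrow> N \<le> 4*A" by linarith
  ultimately have h6: "N \<le> 4 * (l * ln v + Pr * ln (12*Pr) + 2 * Pr * (l+1) * ln (2*v+1))" using h5 by blast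
  have b1: "ln v \<le> q" unfolding q_def using v1 Qlv l1 by (subst ln_le_cancel_iff) auto
  have b2: "ln (12*Pr) \<le> 5 * q"
  proof -
    have "4 * 4 \<le> Q * Q" using Q4 by (intro mult_mono) auto
    then have "12 \<le> Q^2" by (simp add: power2_eq_square)
    moreover have "Pr \<le> Q^3" unfolding Prdef power3_eq_cube using Qlv v1 l1
      by (intro mult_mono) auto
    ultimately have "12*Pr \<le> Q^2 * Q^3" using Pr1 by (intro mult_mono) auto
    then have "12*Pr \<le> Q^5" by (simp add: power_add[symmetric])
    then have "ln (12*Pr) \<le> ln (Q^5)" using Pr1 Q4 by (subst ln_le_cancel_iff) auto
    then show ?thesis using Q4 by (simp add: ln_realpow q_def)
  qed
  have b3: "ln (2*v+1) \<le> 2 * q"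
  proof -
    have "2 * Q \<le> Q * Q" using Q4 by (intro mult_right_mono) auto
    then have "2*v+1 \<le> Q * Q" using Qlv l1 by linarith
    then have "2*v+1 \<le> Q^2" by (simp add: power2_eq_square)
    then have "ln (2*v+1) \<le> ln (Q^2)" using v1 by (subst ln_le_cancel_iff) auto
    then show ?thesis using Q4 by (simp add: ln_realpow q_def)
  qed
  have "N \<le> 4 * (l * q + Pr * (5*q) + 2 * Pr * (l+1) * (2*q))"
  proof -
    have "l * ln v \<le> l * q" using b1 l1 by (intro mult_left_mono) auto
    moreover have "Pr * ln (12*Pr) \<le> Pr * (5*q)" using b2 Pr1 by (intro mult_left_mono) auto
    moreover have "2 * Pr * (l+1) * ln (2*v+1) \<le> 2 * Pr * (l+1) * (2*q)" using b3 Pr1 l1 by (intro mult_left_mono) auto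
    moreover have gen: "X \<le> 4*(a'+b'+c')" if "a \<le> a'" "b \<le> b'" "c \<le> c'" "X \<le> 4*(a+b+c)" for a b c a' b' c' X :: real
      using that by simp
    ultimately show ?thesis using h6 by blast
  qed
  also have "\<dots> = 4 * q * (l + 5 * Pr + 4 * Pr * (l+1))" by (simp add: algebra_simps)
  also have "\<dots> \<le> 4 * q * (53 * l^2 * v^4)"
  proof -
    have Pb: "Pr \<le> 4 * l * v^2"
    proof -
      have "Pr \<le> (2*l) * v * (2*v)" unfolding Prdef using l1 v1 by (intro mult_mono) auto
      then show ?thesis by (simp add: power2_eq_square algebra_simps)
    qed
    have lv2: "l * v^2 \<le> l^2 * v^4"
    proof -
      have "l \<le> l^2" using l1 by (simp add: power2_eq_square)
      moreover have "v^2 \<le> v^4" using v1 by (simp add: power_increasing)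
      ultimately show ?thesis using l1 v1 by (intro mult_mono) auto
    qed
    have "1 \<le> v^2" using v1 by (simp add: one_le_power)
    then have "l * 1 \<le> l * v^2" using l1 by (intro mult_left_mono) auto
    then have lv: "l \<le> l^2 * v^4" using lv2 by simp
    have lv3: "l^2 * v^2 \<le> l^2 * v^4" using v1 by (intro mult_left_mono) (auto simp: power_increasing)
    have "5 * Pr \<le> 20 * (l * v^2)" using Pb by simp
    moreover have "4 * Pr * (l+1) \<le> 4 * (4 * l * v^2) * (2*l)" using Pb l1 Pr1 by (intro mult_mono) auto
    moreover have "4 * (4 * l * v^2) * (2*l) = 32 * (l^2 * v^2)" by (simp add: power2_eq_square algebra_simps)
    ultimately have "l + 5 * Pr + 4 * Pr * (l+1) \<le> l + 20 * (l * v^2) + 32 * (l^2 * v^2)" by linarith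
    also have "\<dots> \<le> 53 * l^2 * v^4" using lv lv2 lv3 by linarith
    finally show ?thesis using q0 by (intro mult_left_mono) auto
  qed
  also have "\<dots> \<le> 256 * l^2 * v^4 * q" using q0 l1 v1 by (simp add: algebra_simps mult_right_mono)
  finally show ?thesis by (simp add: N_def l_def v_def q_def Q_def)
qed

lemma concat_len: "(\<forall>x\<in>set xs. length (Gf x) \<le> B) \<Longrightarrow> length (concat (map Gf xs)) \<le> length xs * B"
  by (induction xs) auto

lemma arch:
  assumes V: "finite V" and nsw: "\<forall>j<length ns. ns!j \<le> w" and w: "1 \<le> w"
   and inV: "\<forall>l k i. l < length ns - 1 \<longrightarrow> k < ns!Suc l \<longrightarrow> i \<le> ns!l \<longrightarrow> idx l k i \<in> V"
   and last1: "ns!(length ns - 1) = 1" and S: "finite S" "\<forall>x\<in>S. length x = ns!0"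
  shows "\<exists>G. length G \<le> card S * (((2*w+1)^(length ns - 1))^2 + (2*w+1)^(length ns - 1)) \<and> (\<forall>g\<in>set G. aff V g) \<and>
     (\<forall>\<theta> \<theta>'. same G \<theta> \<theta>' \<longrightarrow> (\<forall>x\<in>S. (0 \<le> hd (net_eval (dec ns \<theta>) x)) = (0 \<le> hd (net_eval (dec ns \<theta>') x))))"
proof -
  define K where "K = length ns - 1"
  define M where "M = (2*w+1)^K"
  have one: "\<exists>G. length G \<le> M^2 + M \<and> (\<forall>g\<in>set G. aff V g) \<and>
      (\<forall>\<theta> \<theta>'. same G \<theta> \<theta>' \<longrightarrow> (0 \<le> hd (net_eval (dec ns \<theta>) x)) = (0 \<le> hd (net_eval (dec ns \<theta>') x)))"
    if x: "x \<in> S" for x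
  proof -
    obtain Fs where Fs: "length Fs = ns!K" "\<forall>f\<in>set Fs. pwb V M f" "\<forall>\<theta>. net_eval (take K (dec ns \<theta>)) x = map (\<lambda>f. f \<theta>) Fs"
      using layers[OF V nsw w S(2)[rule_format, OF x] inV, of K] by (auto simp: K_def M_def)
    have tk: "take K (dec ns \<theta>) = dec ns \<theta>" for \<theta> by (simp add: dec_def K_def)
    have ne: "Fs \<noteq> []" using Fs(1) last1 by (auto simp: K_def)
    have ev: "hd (net_eval (dec ns \<theta>) x) = hd Fs \<theta>" for \<theta>
      using Fs(3) tk ne by (metis hd_map)
    have "pwb V M (hd Fs)" using Fs(2) ne by simp
    from pwb_sign[OF this] show ?thesis unfolding ev .
  qed
  then have "\<forall>x\<in>S. \<exists>G. length G \<le> M^2 + M \<and> (\<forall>g\<in>set G. aff V g) \<and>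
      (\<forall>\<theta> \<theta>'. same G \<theta> \<theta>' \<longrightarrow> (0 \<le> hd (net_eval (dec ns \<theta>) x)) = (0 \<le> hd (net_eval (dec ns \<theta>') x)))"
    by blast
  then obtain Gf where Gf: "\<forall>x\<in>S. length (Gf x) \<le> M^2 + M \<and> (\<forall>g\<in>set (Gf x). aff V g) \<and>
      (\<forall>\<theta> \<theta>'. same (Gf x) \<theta> \<theta>' \<longrightarrow> (0 \<le> hd (net_eval (dec ns \<theta>) x)) = (0 \<le> hd (net_eval (dec ns \<theta>') x)))"
    by (metis (no_types) bchoice)
  obtain xs where xs: "set xs = S" "distinct xs" using finite_distinct_list[OF S(1)] by blast
  define G where "G = concat (map Gf xs)"
  have "length G \<le> length xs * (M^2 + M)" unfolding G_def using Gf xs(1) by (intro concat_len) auto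
  then have L: "length G \<le> card S * (M^2 + M)" using xs distinct_card by metis
  have A: "\<forall>g\<in>set G. aff V g" using Gf xs(1) by (auto simp: G_def)
  have Sm: "\<forall>x\<in>S. (0 \<le> hd (net_eval (dec ns \<theta>) x)) = (0 \<le> hd (net_eval (dec ns \<theta>') x))"
    if "same G \<theta> \<theta>'" for \<theta> \<theta>'
  proof
    fix x assume x: "x \<in> S"
    have "set (Gf x) \<subseteq> set G" using x xs(1) by (auto simp: G_def)
    then have "same (Gf x) \<theta> \<theta>'" using that by (auto simp: same_def)
    then show "(0 \<le> hd (net_eval (dec ns \<theta>) x)) = (0 \<le> hd (net_eval (dec ns \<theta>') x))" using Gf x by blast
  qed
  show ?thesis using L A Sm unfolding M_def K_def by blast
qed

lemma pat_same: "pat G \<theta> = pat G \<theta>' \<Longrightarrow> same G \<theta> \<theta>'"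
  unfolding pat_def same_def by (simp add: map_eq_conv)

lemma shatter_count:
  assumes L: "1 \<le> L" and w: "1 \<le> w" and dw: "d \<le> w" and S: "finite S" "shatters d (linf_net_class d w L) S"
  shows "2 ^ card S \<le> w^L * (card S * (((2*w+1)^(L+1))^2 + (2*w+1)^(L+1)) + 1)^((L+1)*w*(w+1))"
proof -
  define M where "M = (2*w+1)^(L+1)"
  define B where "B = card S * (M^2 + M)"
  define P where "P = (L+1)*w*(w+1)"
  define V where "V = (\<lambda>(l,k,i). idx l k i) ` ({..L} \<times> {..<w} \<times> {..w})"
  have finV: "finite V" by (simp add: V_def)
  have cardV: "card V \<le> P"
  proof -
    have "card V \<le> card ({..L} \<times> {..<w} \<times> {..w})" unfolding V_def by (rule card_image_le) simp
    also have "\<dots> = P" by (simp add: P_def card_cartesian_product algebra_simps)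
    finally show ?thesis .
  qed
  define H where "H = {hs. set hs \<subseteq> {1..w} \<and> length hs = L}"
  have finH: "finite H" unfolding H_def by (rule finite_lists_length_eq) simp
  have cardH: "card H = w^L" unfolding H_def by (simp add: card_lists_length_eq)
  have Slen: "\<forall>x\<in>S. length x = d" using S(2) by (simp add: shatters_def)
  have perhs: "\<exists>G. length G \<le> B \<and> (\<forall>g\<in>set G. aff V g) \<and>
     (\<forall>\<theta> \<theta>'. same G \<theta> \<theta>' \<longrightarrow> (\<forall>x\<in>S. (0 \<le> hd (net_eval (dec ([d]@hs@[1]) \<theta>) x)) = (0 \<le> hd (net_eval (dec ([d]@hs@[1]) \<theta>') x))))"
    if hs: "hs \<in> H" for hs
  proof -
    define ns where "ns = [d]@hs@[1]"
    have lns: "length ns = L + 2" using hs by (simp add: ns_def H_def)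
    have nsw: "\<forall>j<length ns. ns!j \<le> w"
    proof (intro allI impI)
      fix j assume "j < length ns"
      then have "ns!j \<in> set ns" by simp
      then show "ns!j \<le> w" using hs dw w by (auto simp: ns_def H_def)
    qed
    have inV: "\<forall>l k i. l < length ns - 1 \<longrightarrow> k < ns!Suc l \<longrightarrow> i \<le> ns!l \<longrightarrow> idx l k i \<in> V"
    proof (intro allI impI)
      fix l k i assume a: "l < length ns - 1" "k < ns!Suc l" "i \<le> ns!l"
      have "ns!Suc l \<le> w" "ns!l \<le> w" using nsw a(1) by auto
      then have "(l,k,i) \<in> {..L} \<times> {..<w} \<times> {..w}" using a lns by auto
      then show "idx l k i \<in> V" unfolding V_def by force
    qed
    have last1: "ns!(length ns - 1) = 1" using hs by (simp add: ns_def H_def nth_append)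
    have S0: "\<forall>x\<in>S. length x = ns!0" using Slen by (simp add: ns_def)
    from arch[OF finV nsw w inV last1 S(1) S0] show ?thesis
      unfolding ns_def[symmetric] B_def M_def using lns by simp
  qed
  then obtain Gh where Gh: "\<forall>hs\<in>H. length (Gh hs) \<le> B \<and> (\<forall>g\<in>set (Gh hs). aff V g) \<and>
     (\<forall>\<theta> \<theta>'. same (Gh hs) \<theta> \<theta>' \<longrightarrow> (\<forall>x\<in>S. (0 \<le> hd (net_eval (dec ([d]@hs@[1]) \<theta>) x)) = (0 \<le> hd (net_eval (dec ([d]@hs@[1]) \<theta>') x))))"
    by (metis (no_types) bchoice)
  have real: "\<exists>z. fst z \<in> H \<and> (\<forall>x\<in>S. (0 \<le> hd (net_eval (dec ([d]@fst z@[1]) (snd z)) x)) = (x \<in> T))"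
    if T: "T \<in> Pow S" for T
  proof -
    from S(2) T obtain g where g: "g \<in> linf_net_class d w L" "\<forall>x\<in>S. (0 \<le> g x) = (x \<in> T)"
      unfolding shatters_def by blast
    from g(1) obtain net hs where n: "g = (\<lambda>x. hd (net_eval net x))" "length hs = L"
      "\<forall>h\<in>set hs. 1 \<le> h \<and> h \<le> w" "net_shape ([d] @ hs @ [1]) net"
      unfolding linf_net_class_def by blast
    from dec_surj[OF n(4)] obtain \<theta> where th: "dec ([d] @ hs @ [1]) \<theta> = net" by blast
    have "hs \<in> H" using n(2,3) by (auto simp: H_def)
    then show ?thesis using g(2) th n(1) by (intro exI[of _ "(hs, \<theta>)"]) auto
  qed
  then obtain f where f: "\<forall>T\<in>Pow S. fst (f T) \<in> H \<and> (\<forall>x\<in>S. (0 \<le> hd (net_eval (dec ([d]@fst (f T)@[1]) (snd (f T))) x)) = (x \<in> T))"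
    by (metis (no_types) bchoice)
  define \<Phi> where "\<Phi> T = (fst (f T), pat (Gh (fst (f T))) (snd (f T)))" for T
  have inj: "inj_on \<Phi> (Pow S)"
  proof (rule inj_onI)
    fix T1 T2 assume T1: "T1 \<in> Pow S" and T2: "T2 \<in> Pow S" and eq: "\<Phi> T1 = \<Phi> T2"
    define hs where "hs = fst (f T1)"
    have hs2: "fst (f T2) = hs" using eq by (simp add: \<Phi>_def hs_def)
    have hsH: "hs \<in> H" using f T1 by (simp add: hs_def)
    have "pat (Gh hs) (snd (f T1)) = pat (Gh hs) (snd (f T2))" using eq by (simp add: \<Phi>_def hs_def hs2)
    then have sm: "same (Gh hs) (snd (f T1)) (snd (f T2))" by (rule pat_same)
    have "\<forall>x\<in>S. (x \<in> T1) = (x \<in> T2)"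
    proof
      fix x assume x: "x \<in> S"
      have "(0 \<le> hd (net_eval (dec ([d]@hs@[1]) (snd (f T1))) x)) = (0 \<le> hd (net_eval (dec ([d]@hs@[1]) (snd (f T2))) x))"
        using Gh hsH sm x by blast
      moreover have "(0 \<le> hd (net_eval (dec ([d]@hs@[1]) (snd (f T1))) x)) = (x \<in> T1)"
        using f T1 x unfolding hs_def by blast
      moreover have "(0 \<le> hd (net_eval (dec ([d]@fst (f T2)@[1]) (snd (f T2))) x)) = (x \<in> T2)"
        using f T2 x by blast
      ultimately show "(x \<in> T1) = (x \<in> T2)" unfolding hs2 by simp
    qed
    then show "T1 = T2" using T1 T2 by blast
  qed
  have sub: "\<Phi> ` Pow S \<subseteq> Sigma H (\<lambda>hs. range (pat (Gh hs)))"
    using f by (auto simp: \<Phi>_def)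
  have "2 ^ card S = card (Pow S)" using S(1) by (simp add: card_Pow)
  also have "\<dots> = card (\<Phi> ` Pow S)" using card_image[OF inj] by simp
  also have "\<dots> \<le> card (Sigma H (\<lambda>hs. range (pat (Gh hs))))"
    by (rule card_mono[OF _ sub]) (simp add: finH finite_range_pat)
  also have "\<dots> = (\<Sum>hs\<in>H. card (range (pat (Gh hs))))"
    by (rule card_SigmaI) (simp_all add: finH finite_range_pat)
  also have "\<dots> \<le> (\<Sum>hs\<in>H. (B + 1)^P)"
  proof (rule sum_mono)
    fix hs assume hs: "hs \<in> H"
    have "card (range (pat (Gh hs))) \<le> (length (Gh hs) + 1) ^ card V"
      using count_pats[OF finV] Gh hs by blast
    also have "\<dots> \<le> (B + 1) ^ card V" using Gh hs by (intro power_mono) auto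
    also have "\<dots> \<le> (B + 1) ^ P" using cardV by (intro power_increasing) auto
    finally show "card (range (pat (Gh hs))) \<le> (B + 1)^P" .
  qed
  also have "\<dots> = w^L * (B+1)^P" using cardH by simp
  finally show ?thesis by (simp add: B_def M_def P_def)
qed

lemma main_bound:
  fixes d w L :: nat assumes L: "1 \<le> L" and w: "1 \<le> w" and dw: "d \<le> w"
  shows "VCdim d (linf_net_class d w L) \<le> ereal (256 * real L ^ 2 * real w ^ 4 * (ln (real (L + w + 2))) ^ 1)"
  unfolding VCdim_def
proof (rule Sup_least)
  fix r assume "r \<in> {ereal (real (card S)) |S. finite S \<and> shatters d (linf_net_class d w L) S}"
  then obtain S where S: "finite S" "shatters d (linf_net_class d w L) S" and r: "r = ereal (real (card S))"
    by blast
  have "real (card S) \<le> 256 * real L ^ 2 * real w ^ 4 * ln (real (L + w + 2))"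
    by (rule arith_bound[OF L w refl refl shatter_count[OF L w dw S]])
  then show "r \<le> ereal (256 * real L ^ 2 * real w ^ 4 * (ln (real (L + w + 2))) ^ 1)"
    by (simp add: r)
qed

theorem lemma7:
  "\<exists>(C::real) (k::nat). \<forall>d w L :: nat. 1 \<le> L \<longrightarrow> 1 \<le> w \<longrightarrow> d \<le> w \<longrightarrow>
     VCdim d (linf_net_class d w L)
       \<le> ereal (C * real L ^ 2 * real w ^ 4 * (ln (real (L + w + 2))) ^ k)"
  by (intro exI[of _ "256::real"] exI[of _ "1::nat"] allI impI main_bound)

end
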